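(* Let $\mathcal L\subseteq\mathfrak P(S)$ be an algebraic lattice of sets, endowed with its Zariski topology, and let $\mathcal L_\mathrm{fin}$ be the set of its finitely generated elements. Then: (1) $\mathcal L$ with the Zariski topology is locally with maximum; (2) $\mathcal L_\mathrm{fin}$ is dense in $\mathcal L$ with respect to the constructible topology; (3) $\mathcal L_\mathrm{fin}$, with the subspace Zariski topology, is a spectral space if and only if $\mathcal L_\mathrm{fin}=\mathcal L$.
   Context: $S$ is a nonempty set. A family $\mathcal L\subseteq\mathfrak P(S)$ is an algebraic lattice of sets if it is closed under arbitrary intersections (so $S\in\mathcal L$) and under nonempty up-directed unions. For $F\subseteq S$ let $F^c$ be the intersection of all members of $\mathcal L$ containing $F$; an element $A\in\mathcal L$ is finitely generated if $A=F^c$ for some finite $F\subseteq S$. The Zariski topology on $\mathcal L$ has as basis of open sets the sets $\{A\in\mathcal L\mid G\subseteq A\}$, $G\subseteq S$ finite; with it $\mathcal L$ is a spectral space, and its specialization order is reverse inclusion. A spectral space is locally with maximum if every point has a local basis of open sets each having a maximum in the specialization order ($x\leq y$ iff $y\in\mathrm{Cl}(\{x\})$). The constructible topology is the coarsest topology in which all open quasi-compact sets are clopen. *)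

theory Defs
  imports "HOL-Analysis.Analysis"
begin

definition algebraic_lattice_of_sets :: "'a set \<Rightarrow> 'a set set \<Rightarrow> bool" where
  "algebraic_lattice_of_sets S L \<longleftrightarrow>
     L \<subseteq> Pow S \<and> S \<in> L \<and>
     (\<forall>M. M \<subseteq> L \<and> M \<noteq> {} \<longrightarrow> \<Inter>M \<in> L) \<and>
     (\<forall>M. M \<subseteq> L \<and> M \<noteq> {} \<and> (\<forall>A\<in>M. \<forall>B\<in>M. \<exists>C\<in>M. A \<union> B \<subseteq> C) \<longrightarrow> \<Union>M \<in> L)"

definition lat_closure :: "'a set \<Rightarrow> 'a set set \<Rightarrow> 'a set \<Rightarrow> 'a set" where
  "lat_closure S L F = S \<inter> \<Inter>{A \<in> L. F \<subseteq> A}"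

definition finitely_generated_elems :: "'a set \<Rightarrow> 'a set set \<Rightarrow> 'a set set" where
  "finitely_generated_elems S L = {A \<in> L. \<exists>F. finite F \<and> F \<subseteq> S \<and> A = lat_closure S L F}"

definition zariski_topology :: "'a set \<Rightarrow> 'a set set \<Rightarrow> 'a set topology" where
  "zariski_topology S L = topology_generated_by {{A \<in> L. G \<subseteq> A} | G. finite G \<and> G \<subseteq> S}"

definition specializes :: "'b topology \<Rightarrow> 'b \<Rightarrow> 'b \<Rightarrow> bool" where
  "specializes T x y \<longleftrightarrow> y \<in> T closure_of {x}"

definition locally_with_maximum :: "'b topology \<Rightarrow> bool" where
  "locally_with_maximum T \<longleftrightarrow>
     (\<forall>x U. openin T U \<and> x \<in> U \<longrightarrow>
        (\<exists>V. openin T V \<and> x \<in> V \<and> V \<subseteq> U \<and> (\<exists>m\<in>V. \<forall>y\<in>V. specializes T y m)))"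

definition irreducible_in :: "'b topology \<Rightarrow> 'b set \<Rightarrow> bool" where
  "irreducible_in T C \<longleftrightarrow> C \<noteq> {} \<and> C \<subseteq> topspace T \<and>
     (\<forall>C1 C2. closedin T C1 \<and> closedin T C2 \<and> C \<subseteq> C1 \<union> C2 \<longrightarrow> C \<subseteq> C1 \<or> C \<subseteq> C2)"

definition spectral_space :: "'b topology \<Rightarrow> bool" where
  "spectral_space T \<longleftrightarrow>
     compact_space T \<and> t0_space T \<and>
     (\<forall>U V. openin T U \<and> compactin T U \<and> openin T V \<and> compactin T V \<longrightarrow> compactin T (U \<inter> V)) \<and>
     (\<forall>U x. openin T U \<and> x \<in> U \<longrightarrow> (\<exists>V. openin T V \<and> compactin T V \<and> x \<in> V \<and> V \<subseteq> U)) \<and>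
     (\<forall>C. closedin T C \<and> irreducible_in T C \<longrightarrow> (\<exists>x\<in>C. C = T closure_of {x}))"

definition constructible_topology :: "'b topology \<Rightarrow> 'b topology" where
  "constructible_topology T = topology_generated_by
     ({topspace T} \<union> {U. openin T U \<and> compactin T U} \<union>
      {topspace T - U | U. openin T U \<and> compactin T U})"

end

theory Submission
  imports Defs
begin

locale alg =
  fixes S :: "'a set" and L :: "'a set set"
  assumes alg: "algebraic_lattice_of_sets S L"
begin

abbreviation Z where "Z \<equiv> zariski_topology S L"
abbreviation cl where "cl \<equiv> lat_closure S L"
definition Ob where "Ob G = {A \<in> L. G \<subseteq> A}"

lemma alg_PowS: "L \<subseteq> Pow S"
  by (rule conjunct1[OF alg[unfolded algebraic_lattice_of_sets_def]])

lemma SL: "S \<in> L"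
  by (rule conjunct1[OF conjunct2[OF alg[unfolded algebraic_lattice_of_sets_def]]])

lemma alg_Inter: "\<forall>M. M \<subseteq> L \<and> M \<noteq> {} \<longrightarrow> \<Inter>M \<in> L"
  by (rule conjunct1[OF conjunct2[OF conjunct2[OF alg[unfolded algebraic_lattice_of_sets_def]]]])

lemma alg_Union: "\<forall>M. M \<subseteq> L \<and> M \<noteq> {} \<and> (\<forall>A\<in>M. \<forall>B\<in>M. \<exists>C\<in>M. A \<union> B \<subseteq> C) \<longrightarrow> \<Union>M \<in> L"
  by (rule conjunct2[OF conjunct2[OF conjunct2[OF alg[unfolded algebraic_lattice_of_sets_def]]]])

lemma LS: "A \<in> L \<Longrightarrow> A \<subseteq> S" using alg_PowS by blast

lemma Inter_in: assumes "M \<subseteq> L" "M \<noteq> {}" shows "\<Inter>M \<in> L"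
  by (rule mp[OF spec[OF alg_Inter, of M]]) (intro conjI assms)

lemma Union_in: assumes "M \<subseteq> L" "M \<noteq> {}" "\<forall>A\<in>M. \<forall>B\<in>M. \<exists>C\<in>M. A \<union> B \<subseteq> C" shows "\<Union>M \<in> L"
  by (rule mp[OF spec[OF alg_Union, of M]]) (intro conjI assms)

lemma cl_in: assumes "F \<subseteq> S" shows "cl F \<in> L"
proof -
  have "\<Inter>{A \<in> L. F \<subseteq> A} \<in> L" using assms SL by (intro Inter_in) auto
  moreover have "\<Inter>{A \<in> L. F \<subseteq> A} \<subseteq> S" using assms SL by auto
  ultimately show ?thesis unfolding lat_closure_def by (simp add: Int_absorb1)
qed

lemma cl_sup: "F \<subseteq> S \<Longrightarrow> F \<subseteq> cl F"
  unfolding lat_closure_def by auto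

lemma cl_least: "A \<in> L \<Longrightarrow> F \<subseteq> A \<Longrightarrow> cl F \<subseteq> A"
  unfolding lat_closure_def by auto

lemma cl_mono: assumes "G \<subseteq> S" "F \<subseteq> G" shows "cl F \<subseteq> cl G"
proof -
  have "F \<subseteq> cl G" using cl_sup[OF assms(1)] assms(2) by (rule order_trans[rotated])
  then show ?thesis using cl_least[OF cl_in[OF assms(1)]] by blast
qed

lemma topZ: "topspace Z = L"
proof -
  have "L \<in> {{A \<in> L. G \<subseteq> A} | G. finite G \<and> G \<subseteq> S}" by auto
  then show ?thesis unfolding zariski_topology_def by auto
qed

lemma Ob_open: "finite G \<Longrightarrow> G \<subseteq> S \<Longrightarrow> openin Z (Ob G)"
  unfolding zariski_topology_def Ob_def by (rule topology_generated_by_Basis) auto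

lemma open_char: "openin Z W \<longleftrightarrow> W \<subseteq> L \<and> (\<forall>A\<in>W. \<exists>G. finite G \<and> G \<subseteq> A \<and> Ob G \<subseteq> W)"
proof
  assume "openin Z W"
  then have "generate_topology_on {{A \<in> L. G \<subseteq> A} | G. finite G \<and> G \<subseteq> S} W"
    unfolding zariski_topology_def by (rule openin_topology_generated_by)
  then show "W \<subseteq> L \<and> (\<forall>A\<in>W. \<exists>G. finite G \<and> G \<subseteq> A \<and> Ob G \<subseteq> W)"
  proof (induction rule: generate_topology_on.induct)
    case Empty then show ?case by auto
  next
    case (Int a b)
    have a1: "a \<subseteq> L \<and> (\<forall>A\<in>a. \<exists>G. finite G \<and> G \<subseteq> A \<and> Ob G \<subseteq> a)" by (rule Int.IH(1))
    have b1: "b \<subseteq> L \<and> (\<forall>A\<in>b. \<exists>G. finite G \<and> G \<subseteq> A \<and> Ob G \<subseteq> b)" by (rule Int.IH(2))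
    show ?case
    proof (intro conjI ballI)
      show "a \<inter> b \<subseteq> L" using a1 by auto
      fix A assume A: "A \<in> a \<inter> b"
      obtain G1 where "finite G1" "G1 \<subseteq> A" "Ob G1 \<subseteq> a" using a1 A by auto
      moreover obtain G2 where "finite G2" "G2 \<subseteq> A" "Ob G2 \<subseteq> b" using b1 A by auto
      ultimately show "\<exists>G. finite G \<and> G \<subseteq> A \<and> Ob G \<subseteq> a \<inter> b"
        by (intro exI[of _ "G1 \<union> G2"]) (auto simp: Ob_def)
    qed
  next
    case (UN K)
    show ?case
    proof (intro conjI ballI)
      show "\<Union>K \<subseteq> L" using UN.IH by auto
      fix A assume "A \<in> \<Union>K"
      then obtain k where k: "k \<in> K" "A \<in> k" by auto
      have "k \<subseteq> L \<and> (\<forall>A\<in>k. \<exists>G. finite G \<and> G \<subseteq> A \<and> Ob G \<subseteq> k)" using UN.IH k(1) by simp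
      then obtain G where "finite G" "G \<subseteq> A" "Ob G \<subseteq> k" using k(2) by auto
      then show "\<exists>G. finite G \<and> G \<subseteq> A \<and> Ob G \<subseteq> \<Union>K" using k(1) by auto
    qed
  next
    case (Basis s)
    then obtain G where "finite G" "G \<subseteq> S" "s = Ob G" unfolding Ob_def by auto
    then show ?case by (auto simp: Ob_def)
  qed
next
  assume H: "W \<subseteq> L \<and> (\<forall>A\<in>W. \<exists>G. finite G \<and> G \<subseteq> A \<and> Ob G \<subseteq> W)"
  have "W = \<Union>{Ob G | G. finite G \<and> G \<subseteq> S \<and> Ob G \<subseteq> W}"
  proof
    show "W \<subseteq> \<Union>{Ob G | G. finite G \<and> G \<subseteq> S \<and> Ob G \<subseteq> W}"
    proof
      fix A assume "A \<in> W"
      then obtain G where "finite G" "G \<subseteq> A" "Ob G \<subseteq> W" using H by blast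
      moreover have "A \<subseteq> S" using \<open>A \<in> W\<close> H LS by blast
      moreover have "A \<in> Ob G" using \<open>A \<in> W\<close> H \<open>G \<subseteq> A\<close> by (auto simp: Ob_def)
      ultimately show "A \<in> \<Union>{Ob G | G. finite G \<and> G \<subseteq> S \<and> Ob G \<subseteq> W}" by blast
    qed
  qed auto
  also have "openin Z \<dots>" by (rule openin_Union) (auto intro: Ob_open)
  finally show "openin Z W" .
qed

lemma open_up: assumes "openin Z W" "A \<in> W" "B \<in> L" "A \<subseteq> B" shows "B \<in> W"
proof -
  obtain G where "G \<subseteq> A" "Ob G \<subseteq> W" using assms(1,2) unfolding open_char by blast
  moreover have "B \<in> Ob G" using \<open>G \<subseteq> A\<close> assms(3,4) unfolding Ob_def by blast
  ultimately show ?thesis by blast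
qed

lemma closed_down: assumes "closedin Z C" "A \<in> C" "B \<in> L" "B \<subseteq> A" shows "B \<in> C"
proof (rule ccontr)
  assume "B \<notin> C"
  have "openin Z (L - C)" using assms(1) unfolding closedin_def topZ by simp
  then have "A \<in> L - C" using open_up[of "L - C" B A] \<open>B \<notin> C\<close> assms(3,4) assms(1,2)
    using closedin_subset topZ by blast
  then show False using assms(2) by blast
qed

lemma closure_sing: assumes "x \<in> L" shows "Z closure_of {x} = {y \<in> L. y \<subseteq> x}"
proof (intro set_eqI iffI)
  fix y assume y: "y \<in> Z closure_of {x}"
  then have "y \<in> topspace Z" unfolding closure_of_def by (simp only: mem_Collect_eq)
  then have yL: "y \<in> L" by (simp only: topZ)
  have "a \<in> x" if "a \<in> y" for a
  proof -
    have "a \<in> S" using that yL LS by blast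
    then have "openin Z (Ob {a})" by (intro Ob_open) auto
    moreover have "y \<in> Ob {a}" using that yL by (auto simp: Ob_def)
    ultimately have "\<exists>z\<in>{x}. z \<in> Ob {a}" using y unfolding closure_of_def by (simp only: mem_Collect_eq)
    then have "x \<in> Ob {a}" by simp
    then show ?thesis by (simp add: Ob_def)
  qed
  then show "y \<in> {y \<in> L. y \<subseteq> x}" using yL by blast
next
  fix y assume "y \<in> {y \<in> L. y \<subseteq> x}"
  then have y: "y \<in> L" "y \<subseteq> x" by auto
  have "x \<in> T" if "y \<in> T" "openin Z T" for T using open_up[OF that(2,1) assms y(2)] .
  then show "y \<in> Z closure_of {x}"
    unfolding closure_of_def topZ using y(1) by blast
qed

lemma specializes_iff: "y \<in> L \<Longrightarrow> m \<in> L \<Longrightarrow> specializes Z y m \<longleftrightarrow> m \<subseteq> y"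
proof -
  assume "y \<in> L" "m \<in> L"
  then show ?thesis unfolding specializes_def closure_sing[OF \<open>y \<in> L\<close>] using \<open>m \<in> L\<close> by simp
qed

lemma part1: "locally_with_maximum Z"
  unfolding locally_with_maximum_def
proof (intro allI impI)
  fix x U assume H: "openin Z U \<and> x \<in> U"
  then obtain G where G: "finite G" "G \<subseteq> x" "Ob G \<subseteq> U" unfolding open_char by blast
  have xL: "x \<in> L" using H open_char by blast
  then have GS: "G \<subseteq> S" using G LS by blast
  show "\<exists>V. openin Z V \<and> x \<in> V \<and> V \<subseteq> U \<and> (\<exists>m\<in>V. \<forall>y\<in>V. specializes Z y m)"
  proof (intro exI conjI bexI ballI)
    show "openin Z (Ob G)" using G GS Ob_open by blast
    show "x \<in> Ob G" using xL G by (auto simp: Ob_def)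
    show "Ob G \<subseteq> U" by fact
    show "cl G \<in> Ob G" using cl_in cl_sup GS by (auto simp: Ob_def)
    fix y assume "y \<in> Ob G"
    then have "y \<in> L" "G \<subseteq> y" by (auto simp: Ob_def)
    then show "specializes Z y (cl G)"
      using specializes_iff[OF \<open>y \<in> L\<close> cl_in[OF GS]] cl_least[OF \<open>y \<in> L\<close> \<open>G \<subseteq> y\<close>] by simp
  qed
qed


definition Lf where "Lf = finitely_generated_elems S L"

lemma Lf_sub: "Lf \<subseteq> L" unfolding Lf_def finitely_generated_elems_def by blast

lemma cl_Lf: "finite F \<Longrightarrow> F \<subseteq> S \<Longrightarrow> cl F \<in> Lf"
  unfolding Lf_def finitely_generated_elems_def using cl_in by blast

definition Gen where "Gen = {topspace Z} \<union> {U. openin Z U \<and> compactin Z U} \<union>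
      {topspace Z - U | U. openin Z U \<and> compactin Z U}"

lemma Con_eq: "constructible_topology Z = topology_generated_by Gen"
  unfolding constructible_topology_def Gen_def by simp

lemma topCon: "topspace (constructible_topology Z) = L"
proof -
  have "\<Union>Gen = L"
  proof
    show "\<Union>Gen \<subseteq> L" unfolding Gen_def topZ using openin_subset topZ by fastforce
    show "L \<subseteq> \<Union>Gen" unfolding Gen_def topZ by blast
  qed
  then show ?thesis unfolding Con_eq by simp
qed

definition good where "good W A G \<longleftrightarrow> (\<forall>F. finite F \<and> G \<subseteq> F \<and> F \<subseteq> A \<longrightarrow> cl F \<in> W)"

lemma goodI: "(\<And>F. finite F \<Longrightarrow> G \<subseteq> F \<Longrightarrow> F \<subseteq> A \<Longrightarrow> cl F \<in> W) \<Longrightarrow> good W A G"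
  unfolding good_def by simp

lemma goodD: "good W A G \<Longrightarrow> finite F \<Longrightarrow> G \<subseteq> F \<Longrightarrow> F \<subseteq> A \<Longrightarrow> cl F \<in> W"
  unfolding good_def by simp

lemma good_Int: assumes "good a A G1" "good b A G2" shows "good (a \<inter> b) A (G1 \<union> G2)"
proof (rule goodI)
  fix F assume "finite F" "G1 \<union> G2 \<subseteq> F" "F \<subseteq> A"
  then have "cl F \<in> a" "cl F \<in> b" using goodD[OF assms(1)] goodD[OF assms(2)] by simp_all
  then show "cl F \<in> a \<inter> b" by (rule IntI)
qed

lemma good_mono: assumes "good a A G" "a \<subseteq> b" shows "good b A G"
proof (rule goodI)
  fix F assume "finite F" "G \<subseteq> F" "F \<subseteq> A"
  then have "cl F \<in> a" using goodD[OF assms(1)] by simp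
  then show "cl F \<in> b" using assms(2) by (rule subsetD[rotated])
qed

lemma con_prop:
  assumes "generate_topology_on Gen W"
  shows "\<forall>A\<in>W. \<exists>G. finite G \<and> G \<subseteq> A \<and> good W A G"
  using assms
proof (induction rule: generate_topology_on.induct)
  case Empty then show ?case by simp
next
  case (Int a b)
  show ?case
  proof
    fix A assume A: "A \<in> a \<inter> b"
    have "A \<in> a" "A \<in> b" using A by simp_all
    obtain G1 where G1: "finite G1" "G1 \<subseteq> A" "good a A G1"
      using bspec[OF Int.IH(1) \<open>A \<in> a\<close>] by (elim exE conjE)
    obtain G2 where G2: "finite G2" "G2 \<subseteq> A" "good b A G2"
      using bspec[OF Int.IH(2) \<open>A \<in> b\<close>] by (elim exE conjE)
    have "good (a \<inter> b) A (G1 \<union> G2)" using G1(3) G2(3) by (rule good_Int)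
    moreover have "finite (G1 \<union> G2)" "G1 \<union> G2 \<subseteq> A" using G1 G2 by simp_all
    ultimately show "\<exists>G. finite G \<and> G \<subseteq> A \<and> good (a \<inter> b) A G" by blast
  qed
next
  case (UN K)
  show ?case
  proof
    fix A assume "A \<in> \<Union>K"
    then obtain k where k: "k \<in> K" "A \<in> k" by (rule UnionE)
    have "\<forall>A\<in>k. \<exists>G. finite G \<and> G \<subseteq> A \<and> good k A G"
      using UN.IH k(1) by simp
    then have "\<exists>G. finite G \<and> G \<subseteq> A \<and> good k A G" using k(2) by (rule bspec)
    then obtain G where G: "finite G" "G \<subseteq> A" "good k A G" by (elim exE conjE)
    have "good (\<Union>K) A G" using G(3) by (rule good_mono) (use k(1) in blast)
    then show "\<exists>G. finite G \<and> G \<subseteq> A \<and> good (\<Union>K) A G"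
      using G(1,2) by blast
  qed
next
  case (Basis s)
  show ?case
  proof
    fix A assume A: "A \<in> s"
    consider "s = L" | "openin Z s" | U where "openin Z U" "s = L - U"
      using Basis unfolding Gen_def topZ by blast
    then show "\<exists>G. finite G \<and> G \<subseteq> A \<and> good s A G"
    proof cases
      case 1
      have "good s A {}"
      proof (rule goodI)
        fix F assume "F \<subseteq> A"
        have "A \<subseteq> S" using A 1 LS by simp
        then have "F \<subseteq> S" using \<open>F \<subseteq> A\<close> by (rule order_trans[rotated])
        then show "cl F \<in> s" using cl_in 1 by simp
      qed
      then show ?thesis by blast
    next
      case 2
      then obtain G where G: "finite G" "G \<subseteq> A" "Ob G \<subseteq> s" using A unfolding open_char by blast
      have AL: "A \<in> L" using 2 A open_char by blast
      have "good s A G"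
      proof (rule goodI)
        fix F assume that: "G \<subseteq> F" "F \<subseteq> A"
        have FS: "F \<subseteq> S" using that AL LS by blast
        have "cl F \<in> Ob G" unfolding Ob_def using cl_in[OF FS] cl_sup[OF FS] that(1) by blast
        then show "cl F \<in> s" using G(3) by blast
      qed
      then show ?thesis using G(1,2) by blast
    next
      case 3
      have AL: "A \<in> L" and AU: "A \<notin> U" using 3 A by auto
      have "good s A {}"
      proof (rule goodI)
        fix F assume that: "F \<subseteq> A"
        have FS: "F \<subseteq> S" using that AL LS by blast
        have c1: "cl F \<in> L" using cl_in[OF FS] .
        have "cl F \<notin> U"
        proof
          assume "cl F \<in> U"
          then have "A \<in> U" using open_up[OF 3(1) _ AL cl_least[OF AL that]] by blast
          then show False using AU by blast
        qed
        then show "cl F \<in> s" using c1 3(2) by blast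
      qed
      then show ?thesis by blast
    qed
  qed
qed

lemma part2: "constructible_topology Z closure_of Lf = L"
proof
  show "constructible_topology Z closure_of Lf \<subseteq> L"
    using closure_of_subset_topspace[of "constructible_topology Z" Lf] by (simp only: topCon)
  show "L \<subseteq> constructible_topology Z closure_of Lf"
  proof
    fix A assume AL: "A \<in> L"
    have "\<exists>y\<in>Lf. y \<in> T" if AT: "A \<in> T" and oT: "openin (constructible_topology Z) T" for T
    proof -
      have gT: "generate_topology_on Gen T" using oT unfolding Con_eq
        by (rule openin_topology_generated_by)
      obtain G where G: "finite G" "G \<subseteq> A" "good T A G"
        using bspec[OF con_prop[OF gT] AT] by (elim exE conjE)
      have "G \<subseteq> S" using G(2) AL LS by blast
      then have "cl G \<in> Lf" using cl_Lf G(1) by blast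
      moreover have "cl G \<in> T" using goodD[OF G(3) G(1)] G(2) by simp
      ultimately show ?thesis by blast
    qed
    moreover have "A \<in> topspace (constructible_topology Z)" using AL topCon by simp
    ultimately show "A \<in> constructible_topology Z closure_of Lf"
      unfolding closure_of_def by blast
  qed
qed


lemma closed_compl_Ob: assumes "finite G" "G \<subseteq> S" shows "closedin Z (L - Ob G)"
proof -
  have "Ob G \<subseteq> L" unfolding Ob_def by blast
  then have "topspace Z - (L - Ob G) = Ob G" unfolding topZ by blast
  then show ?thesis unfolding closedin_def topZ using Ob_open[OF assms] by simp
qed

lemma part3a:
  assumes sp: "spectral_space (subtopology Z Lf)"
  shows "Lf = L"
proof
  show "Lf \<subseteq> L" by (rule Lf_sub)
  show "L \<subseteq> Lf"
  proof
    fix A assume AL: "A \<in> L"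
    define T where "T = subtopology Z Lf"
    define C where "C = {B \<in> Lf. B \<subseteq> A}"
    have AS: "A \<subseteq> S" using AL by (rule LS)
    have topT: "topspace T = Lf" unfolding T_def topspace_subtopology topZ using Lf_sub by blast
    have KC: "C = (Z closure_of {A}) \<inter> Lf" unfolding C_def closure_sing[OF AL] using Lf_sub by blast
    have clC: "closedin T C" unfolding T_def closedin_subtopology
      using KC closedin_closure_of by blast
    have e0: "cl {} \<in> C" unfolding C_def using cl_Lf[of "{}"] cl_least[OF AL, of "{}"] by simp
    have irr: "irreducible_in T C"
      unfolding irreducible_in_def
    proof (intro conjI allI impI)
      show "C \<noteq> {}" using e0 by blast
      show "C \<subseteq> topspace T" unfolding topT C_def by blast
      fix C1 C2 assume H: "closedin T C1 \<and> closedin T C2 \<and> C \<subseteq> C1 \<union> C2"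
      obtain K1 where K1: "closedin Z K1" "C1 = K1 \<inter> Lf"
        using H unfolding T_def closedin_subtopology by blast
      obtain K2 where K2: "closedin Z K2" "C2 = K2 \<inter> Lf"
        using H unfolding T_def closedin_subtopology by blast
      show "C \<subseteq> C1 \<or> C \<subseteq> C2"
      proof (rule ccontr)
        assume "\<not> (C \<subseteq> C1 \<or> C \<subseteq> C2)"
        then obtain B1 B2 where B1: "B1 \<in> C" "B1 \<notin> C1" and B2: "B2 \<in> C" "B2 \<notin> C2" by blast
        have "B1 \<in> Lf" "B2 \<in> Lf" using B1(1) B2(1) unfolding C_def by simp_all
        then obtain F1 F2 where F1: "finite F1" "F1 \<subseteq> S" "B1 = cl F1"
          and F2: "finite F2" "F2 \<subseteq> S" "B2 = cl F2"
          unfolding Lf_def finitely_generated_elems_def by blast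
        have FS: "F1 \<union> F2 \<subseteq> S" using F1 F2 by simp
        have s1: "B1 \<subseteq> cl (F1 \<union> F2)" using F1(3) cl_mono[OF FS, of F1] by simp
        have s2: "B2 \<subseteq> cl (F1 \<union> F2)" using F2(3) cl_mono[OF FS, of F2] by simp
        have "F1 \<subseteq> B1" "F2 \<subseteq> B2" using F1 F2 cl_sup by simp_all
        moreover have "B1 \<subseteq> A" "B2 \<subseteq> A" using B1(1) B2(1) unfolding C_def by simp_all
        ultimately have "F1 \<union> F2 \<subseteq> A" by blast
        then have "cl (F1 \<union> F2) \<subseteq> A" by (rule cl_least[OF AL])
        moreover have "cl (F1 \<union> F2) \<in> Lf" using cl_Lf F1(1) F2(1) FS by simp
        ultimately have BC: "cl (F1 \<union> F2) \<in> C" unfolding C_def by simp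
        have B1L: "B1 \<in> L" "B2 \<in> L" using \<open>B1 \<in> Lf\<close> \<open>B2 \<in> Lf\<close> Lf_sub by blast+
        have "cl (F1 \<union> F2) \<in> C1 \<union> C2" using BC H by blast
        then show False
        proof
          assume "cl (F1 \<union> F2) \<in> C1"
          then have "cl (F1 \<union> F2) \<in> K1" using K1(2) by simp
          then have "B1 \<in> K1" using closed_down[OF K1(1) _ B1L(1) s1] by simp
          then have "B1 \<in> C1" using K1(2) \<open>B1 \<in> Lf\<close> by simp
          then show False using B1(2) by simp
        next
          assume "cl (F1 \<union> F2) \<in> C2"
          then have "cl (F1 \<union> F2) \<in> K2" using K2(2) by simp
          then have "B2 \<in> K2" using closed_down[OF K2(1) _ B1L(2) s2] by simp
          then have "B2 \<in> C2" using K2(2) \<open>B2 \<in> Lf\<close> by simp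
          then show False using B2(2) by simp
        qed
      qed
    qed
    have "\<forall>C. closedin T C \<and> irreducible_in T C \<longrightarrow> (\<exists>x\<in>C. C = T closure_of {x})"
      using sp unfolding spectral_space_def T_def by (elim conjE)
    then obtain x where x: "x \<in> C" "C = T closure_of {x}" using clC irr by blast
    have xL: "x \<in> L" "x \<subseteq> A" "x \<in> Lf" using x(1) Lf_sub unfolding C_def by blast+
    have "C \<subseteq> Z closure_of {x}" unfolding x(2)[symmetric] T_def[symmetric]
      using closure_of_subtopology_subset[of Z Lf "{x}"] x(2) T_def by simp
    then have Cx: "C \<subseteq> {y \<in> L. y \<subseteq> x}" unfolding closure_sing[OF xL(1)] .
    have "A \<subseteq> x"
    proof
      fix a assume "a \<in> A"
      then have aS: "{a} \<subseteq> S" using AS by blast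
      have "cl {a} \<subseteq> A" using \<open>a \<in> A\<close> by (intro cl_least[OF AL]) simp
      then have "cl {a} \<in> C" unfolding C_def using cl_Lf[OF _ aS] by simp
      then have "cl {a} \<subseteq> x" using Cx by blast
      then show "a \<in> x" using cl_sup[OF aS] by blast
    qed
    then have "A = x" using xL(2) by (rule antisym)
    then show "A \<in> Lf" using xL(3) by simp
  qed
qed


lemma Ob_compact: assumes "finite G" "G \<subseteq> S" shows "compactin Z (Ob G)"
  unfolding compactin_def
proof (intro conjI allI impI)
  show "Ob G \<subseteq> topspace Z" unfolding topZ Ob_def by blast
  fix U assume H: "(\<forall>u\<in>U. openin Z u) \<and> Ob G \<subseteq> \<Union>U"
  have cG: "cl G \<in> Ob G" unfolding Ob_def using cl_in[OF assms(2)] cl_sup[OF assms(2)] by blast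
  then obtain u where u: "u \<in> U" "cl G \<in> u" using H by blast
  have ou: "openin Z u" using H u(1) by blast
  have "Ob G \<subseteq> u"
  proof
    fix B assume "B \<in> Ob G"
    then have "B \<in> L" "G \<subseteq> B" unfolding Ob_def by simp_all
    then show "B \<in> u" using open_up[OF ou u(2) \<open>B \<in> L\<close> cl_least] by blast
  qed
  then show "\<exists>F. finite F \<and> F \<subseteq> U \<and> Ob G \<subseteq> \<Union>F" using u(1)
    by (intro exI[of _ "{u}"]) simp
qed

definition Bs where "Bs = {Ob G | G. finite G \<and> G \<subseteq> S}"

lemma co_decomp: assumes "openin Z U" "compactin Z U"
  shows "\<exists>F. finite F \<and> F \<subseteq> Bs \<and> U = \<Union>F"
proof -
  define V where "V = {b \<in> Bs. b \<subseteq> U}"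
  have "\<forall>v\<in>V. openin Z v" unfolding V_def Bs_def using Ob_open by blast
  moreover have "U \<subseteq> \<Union>V"
  proof
    fix A assume "A \<in> U"
    then obtain G where G: "finite G" "G \<subseteq> A" "Ob G \<subseteq> U" using assms(1) unfolding open_char by blast
    have "A \<in> L" using \<open>A \<in> U\<close> assms(1) open_char by blast
    then have "G \<subseteq> S" using G(2) LS by blast
    then have "Ob G \<in> V" unfolding V_def Bs_def using G by blast
    moreover have "A \<in> Ob G" unfolding Ob_def using \<open>A \<in> L\<close> G(2) by simp
    ultimately show "A \<in> \<Union>V" by blast
  qed
  ultimately obtain F where F: "finite F" "F \<subseteq> V" "U \<subseteq> \<Union>F"
    using assms(2) unfolding compactin_def by blast
  have "\<Union>F \<subseteq> U" using F(2) unfolding V_def by blast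
  then show ?thesis using F unfolding V_def by blast
qed

lemma Bs_compact: "b \<in> Bs \<Longrightarrow> compactin Z b"
  unfolding Bs_def using Ob_compact by blast

lemma Bs_Int: "a \<in> Bs \<Longrightarrow> b \<in> Bs \<Longrightarrow> a \<inter> b \<in> Bs"
proof -
  assume "a \<in> Bs" "b \<in> Bs"
  then obtain G H where "finite G" "G \<subseteq> S" "a = Ob G" "finite H" "H \<subseteq> S" "b = Ob H"
    unfolding Bs_def by blast
  moreover have "Ob G \<inter> Ob H = Ob (G \<union> H)" unfolding Ob_def by blast
  ultimately show "a \<inter> b \<in> Bs" unfolding Bs_def by blast
qed

lemma generic:
  assumes cC: "closedin Z C" and iC: "irreducible_in Z C"
  shows "\<exists>x\<in>C. C = Z closure_of {x}"
proof -
  have CL: "C \<subseteq> L" using closedin_subset[OF cC] topZ by simp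
  have Cne: "C \<noteq> {}" using iC unfolding irreducible_in_def by simp
  have irr: "\<And>C1 C2. closedin Z C1 \<Longrightarrow> closedin Z C2 \<Longrightarrow> C \<subseteq> C1 \<union> C2 \<Longrightarrow> C \<subseteq> C1 \<or> C \<subseteq> C2"
  proof -
    fix C1 C2 assume "closedin Z C1" "closedin Z C2" "C \<subseteq> C1 \<union> C2"
    have "\<forall>C1 C2. closedin Z C1 \<and> closedin Z C2 \<and> C \<subseteq> C1 \<union> C2 \<longrightarrow> C \<subseteq> C1 \<or> C \<subseteq> C2"
      using iC unfolding irreducible_in_def by (elim conjE)
    then show "C \<subseteq> C1 \<or> C \<subseteq> C2" using \<open>closedin Z C1\<close> \<open>closedin Z C2\<close> \<open>C \<subseteq> C1 \<union> C2\<close> by simp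
  qed
  have US: "\<Union>C \<subseteq> S" using CL LS by blast
  have claim: "finite F \<Longrightarrow> F \<subseteq> \<Union>C \<Longrightarrow> \<exists>D\<in>C. F \<subseteq> D" for F
  proof (induction F rule: finite_induct)
    case empty then show ?case using Cne by blast
  next
    case (insert a F)
    then obtain D2 where D2: "D2 \<in> C" "F \<subseteq> D2" by blast
    obtain D1 where D1: "D1 \<in> C" "a \<in> D1" using insert.prems by blast
    have aS: "{a} \<subseteq> S" and FS: "F \<subseteq> S" using insert.prems US by blast+
    show ?case
    proof (rule ccontr)
      assume nD: "\<not> (\<exists>D\<in>C. insert a F \<subseteq> D)"
      have "C \<subseteq> (L - Ob {a}) \<union> (L - Ob F)"
      proof
        fix D assume "D \<in> C"
        then have "D \<in> L" using CL by blast
        have "\<not> insert a F \<subseteq> D" using nD \<open>D \<in> C\<close> by blast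
        then show "D \<in> (L - Ob {a}) \<union> (L - Ob F)" using \<open>D \<in> L\<close> unfolding Ob_def by blast
      qed
      moreover have "closedin Z (L - Ob {a})" using closed_compl_Ob[OF _ aS] by simp
      moreover have "closedin Z (L - Ob F)" using closed_compl_Ob[OF insert.hyps(1) FS] .
      ultimately have "C \<subseteq> L - Ob {a} \<or> C \<subseteq> L - Ob F"
        using irr by blast
      moreover have "D1 \<in> Ob {a}" "D2 \<in> Ob F" unfolding Ob_def using D1 D2 CL by blast+
      ultimately show False using D1(1) D2(1) by blast
    qed
  qed
  define M where "M = {cl F | F. finite F \<and> F \<subseteq> \<Union>C}"
  have Mel: "\<exists>F. m = cl F \<and> finite F \<and> F \<subseteq> \<Union>C" if "m \<in> M" for m
    using that unfolding M_def by (rule CollectD)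
  have MsubL: "M \<subseteq> L"
  proof
    fix m assume "m \<in> M"
    then obtain F where F: "m = cl F" "finite F" "F \<subseteq> \<Union>C" using Mel[OF \<open>m \<in> M\<close>] by (elim exE conjE)
    have "F \<subseteq> S" using F(3) US by (rule order_trans)
    then show "m \<in> L" unfolding F(1) by (rule cl_in)
  qed
  have "cl {} \<in> M" unfolding M_def by (rule CollectI, intro exI[of _ "{}"]) simp
  then have Mne: "M \<noteq> {}" by blast
  have Mdir: "\<forall>A\<in>M. \<forall>B\<in>M. \<exists>D\<in>M. A \<union> B \<subseteq> D"
  proof (intro ballI)
    fix A B assume "A \<in> M" "B \<in> M"
    obtain F1 where F1: "A = cl F1" "finite F1" "F1 \<subseteq> \<Union>C" using Mel[OF \<open>A \<in> M\<close>] by (elim exE conjE)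
    obtain F2 where F2: "B = cl F2" "finite F2" "F2 \<subseteq> \<Union>C" using Mel[OF \<open>B \<in> M\<close>] by (elim exE conjE)
    note F = F1(2,3,1) F2(2,3,1)
    have FS: "F1 \<union> F2 \<subseteq> S" using F US by blast
    have "cl F1 \<subseteq> cl (F1 \<union> F2)" "cl F2 \<subseteq> cl (F1 \<union> F2)" using cl_mono[OF FS] by simp_all
    then have AB: "A \<union> B \<subseteq> cl (F1 \<union> F2)" unfolding F(3) F(6) by (rule Un_least)
    have "finite (F1 \<union> F2)" "F1 \<union> F2 \<subseteq> \<Union>C" using F by simp_all
    then have "cl (F1 \<union> F2) \<in> M" unfolding M_def by (intro CollectI exI[of _ "F1 \<union> F2"]) simp
    then show "\<exists>D\<in>M. A \<union> B \<subseteq> D" using AB by (rule bexI[rotated])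
  qed
  have MU: "\<Union>M = \<Union>C"
  proof
    show "\<Union>M \<subseteq> \<Union>C"
    proof
      fix y assume "y \<in> \<Union>M"
      then obtain m where m: "m \<in> M" "y \<in> m" by (rule UnionE)
      obtain F where F0: "m = cl F" "finite F" "F \<subseteq> \<Union>C" using Mel[OF m(1)] by (elim exE conjE)
      note F = F0(2,3) m(2)[unfolded F0(1)]
      obtain D where D: "D \<in> C" "F \<subseteq> D" using claim[OF F(1,2)] by blast
      have "D \<in> L" using D(1) CL by blast
      then have "cl F \<subseteq> D" using D(2) by (rule cl_least)
      then show "y \<in> \<Union>C" using F(3) D(1) by blast
    qed
    show "\<Union>C \<subseteq> \<Union>M"
    proof
      fix y assume "y \<in> \<Union>C"
      then have "{y} \<subseteq> S" using US by blast
      then have "y \<in> cl {y}" using cl_sup by blast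
      moreover have "cl {y} \<in> M" unfolding M_def using \<open>y \<in> \<Union>C\<close> by (intro CollectI exI[of _ "{y}"]) simp
      ultimately show "y \<in> \<Union>M" by blast
    qed
  qed
  have xL: "\<Union>C \<in> L" using Union_in[OF MsubL Mne Mdir] MU by simp
  have xC: "\<Union>C \<in> C"
  proof (rule ccontr)
    assume "\<Union>C \<notin> C"
    have oc: "openin Z (L - C)" using cC unfolding closedin_def topZ by simp
    have "\<forall>A\<in>L - C. \<exists>G. finite G \<and> G \<subseteq> A \<and> Ob G \<subseteq> L - C"
      using oc unfolding open_char by (elim conjE)
    moreover have "\<Union>C \<in> L - C" using xL \<open>\<Union>C \<notin> C\<close> by simp
    ultimately have "\<exists>G. finite G \<and> G \<subseteq> \<Union>C \<and> Ob G \<subseteq> L - C" by (rule bspec)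
    then obtain G where G: "finite G" "G \<subseteq> \<Union>C" "Ob G \<subseteq> L - C" by (elim exE conjE)
    obtain D where D: "D \<in> C" "G \<subseteq> D" using claim[OF G(1,2)] by blast
    have "D \<in> Ob G" unfolding Ob_def using D CL by blast
    then show False using G(3) D(1) by blast
  qed
  have "C = Z closure_of {\<Union>C}"
    unfolding closure_sing[OF xL]
  proof
    show "C \<subseteq> {y \<in> L. y \<subseteq> \<Union>C}" using CL by blast
    show "{y \<in> L. y \<subseteq> \<Union>C} \<subseteq> C" using closed_down[OF cC xC] by blast
  qed
  then show ?thesis using xC by (intro bexI[of _ "\<Union>C"])
qed

lemma part3b: "spectral_space Z"
  unfolding spectral_space_def
proof (intro conjI allI impI)
  have "topspace Z = Ob {}" unfolding topZ Ob_def by simp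
  then show "compact_space Z" unfolding compact_space_def using Ob_compact[of "{}"] by simp
  show "t0_space Z" unfolding t0_space_def topZ
  proof (intro ballI impI)
    fix x y assume xy: "x \<in> L" "y \<in> L" "x \<noteq> y"
    have "\<not> (x \<subseteq> y \<and> y \<subseteq> x)" using xy(3) subset_antisym by blast
    then have "\<exists>a. (a \<in> x \<and> a \<notin> y) \<or> (a \<in> y \<and> a \<notin> x)" by (simp only: subset_iff) blast
    then obtain a where a: "(a \<in> x \<and> a \<notin> y) \<or> (a \<in> y \<and> a \<notin> x)" by (elim exE)
    have "a \<in> S" using a xy LS by blast
    then have "openin Z (Ob {a})" using Ob_open[of "{a}"] by simp
    moreover have "x \<notin> Ob {a} \<longleftrightarrow> y \<in> Ob {a}" unfolding Ob_def using a xy by blast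
    ultimately show "\<exists>U. openin Z U \<and> (x \<notin> U \<longleftrightarrow> y \<in> U)" by blast
  qed
next
  fix U V assume H: "openin Z U \<and> compactin Z U \<and> openin Z V \<and> compactin Z V"
  have "\<exists>F. finite F \<and> F \<subseteq> Bs \<and> U = \<Union>F" using H by (intro co_decomp) simp_all
  then obtain F1 where F1: "finite F1" "F1 \<subseteq> Bs" "U = \<Union>F1" by (elim exE conjE)
  have "\<exists>F. finite F \<and> F \<subseteq> Bs \<and> V = \<Union>F" using H by (intro co_decomp) simp_all
  then obtain F2 where F2: "finite F2" "F2 \<subseteq> Bs" "V = \<Union>F2" by (elim exE conjE)
  define F where "F = (\<lambda>p. fst p \<inter> snd p) ` (F1 \<times> F2)"
  have "finite F" unfolding F_def using F1(1) F2(1) by simp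
  moreover have "compactin Z c" if cF: "c \<in> F" for c
  proof -
    obtain p where p: "p \<in> F1 \<times> F2" "c = fst p \<inter> snd p" using cF unfolding F_def by (rule imageE)
    have "fst p \<in> Bs" "snd p \<in> Bs" using p(1) F1(2) F2(2) by auto
    then have "c \<in> Bs" using p(2) Bs_Int by simp
    then show ?thesis by (rule Bs_compact)
  qed
  ultimately have "compactin Z (\<Union>F)" by (rule compactin_Union)
  moreover have "\<Union>F = U \<inter> V"
  proof
    show "\<Union>F \<subseteq> U \<inter> V"
    proof
      fix z assume "z \<in> \<Union>F"
      then obtain c where cF: "c \<in> F" and zc: "z \<in> c" by (rule UnionE)
      obtain p where p: "p \<in> F1 \<times> F2" "c = fst p \<inter> snd p" using cF unfolding F_def by (rule imageE)
      have "fst p \<in> F1" "snd p \<in> F2" using p(1) by auto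
      then show "z \<in> U \<inter> V" unfolding F1(3) F2(3) using zc p(2) by blast
    qed
    show "U \<inter> V \<subseteq> \<Union>F"
    proof
      fix z assume "z \<in> U \<inter> V"
      then obtain a b where ab: "a \<in> F1" "z \<in> a" "b \<in> F2" "z \<in> b" unfolding F1(3) F2(3) by blast
      have "(a, b) \<in> F1 \<times> F2" using ab by simp
      then have "fst (a, b) \<inter> snd (a, b) \<in> F" unfolding F_def by (rule imageI)
      then have "a \<inter> b \<in> F" by simp
      then show "z \<in> \<Union>F" using ab by blast
    qed
  qed
  ultimately show "compactin Z (U \<inter> V)" by simp
next
  fix U x assume H: "openin Z U \<and> x \<in> U"
  then obtain G where G: "finite G" "G \<subseteq> x" "Ob G \<subseteq> U" unfolding open_char by blast
  have xL: "x \<in> L" using H open_char by blast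
  then have GS: "G \<subseteq> S" using G LS by blast
  show "\<exists>V. openin Z V \<and> compactin Z V \<and> x \<in> V \<and> V \<subseteq> U"
  proof (intro exI conjI)
    show "openin Z (Ob G)" using Ob_open[OF G(1) GS] .
    show "compactin Z (Ob G)" using Ob_compact[OF G(1) GS] .
    show "x \<in> Ob G" unfolding Ob_def using xL G(2) by simp
    show "Ob G \<subseteq> U" by (rule G(3))
  qed
next
  fix C assume "closedin Z C \<and> irreducible_in Z C"
  then show "\<exists>x\<in>C. C = Z closure_of {x}" by (intro generic) simp_all
qed

end

theorem proposition4p3:
  fixes S :: "'a set" and L :: "'a set set"
  assumes "S \<noteq> {}" and "algebraic_lattice_of_sets S L"
  shows "locally_with_maximum (zariski_topology S L)
    \<and> (constructible_topology (zariski_topology S L)) closure_of (finitely_generated_elems S L) = L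
    \<and> (spectral_space (subtopology (zariski_topology S L) (finitely_generated_elems S L))
         \<longleftrightarrow> finitely_generated_elems S L = L)"
proof -
  interpret alg S L by (rule alg.intro) (rule assms(2))
  have 1: "locally_with_maximum (zariski_topology S L)" by (rule part1)
  have 2: "(constructible_topology (zariski_topology S L)) closure_of (finitely_generated_elems S L) = L"
    using part2 unfolding Lf_def .
  have 3: "spectral_space (subtopology (zariski_topology S L) (finitely_generated_elems S L))
         \<longleftrightarrow> finitely_generated_elems S L = L"
  proof
    assume "spectral_space (subtopology (zariski_topology S L) (finitely_generated_elems S L))"
    then show "finitely_generated_elems S L = L" using part3a unfolding Lf_def by blast
  next
    assume "finitely_generated_elems S L = L"
    then show "spectral_space (subtopology (zariski_topology S L) (finitely_generated_elems S L))"
      using part3b topZ subtopology_topspace[of "zariski_topology S L"] by simp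
  qed
  show ?thesis using 1 2 3 by blast
qed

end
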